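(* Let $\rho_{AB}$ be a density matrix on two qubits $\mathcal H_A\otimes\mathcal H_B=\mathbb C^2\otimes\mathbb C^2$ such that $\langle \psi|\rho_{AB}|\psi\rangle\geq 1-\epsilon$, where $|\psi\rangle_{AB}=\frac{1}{\sqrt2}(|00\rangle+|11\rangle)$ and $\epsilon\ge 0$. Then $\mu(\rho_{AB})\geq 1-2\epsilon$.
   Context: For a bipartite density matrix $\rho_{AB}$ on $\mathcal H_A\otimes\mathcal H_B$ with reduced states $\rho_A=\mathrm{tr}_B\rho_{AB}$, $\rho_B=\mathrm{tr}_A\rho_{AB}$, the maximal correlation is $\mu(\rho_{AB})=\max |\mathrm{tr}(\rho_{AB}\, X_A\otimes Y_B^\dagger)|$, the maximum over $X_A\in\mathbf L(\mathcal H_A)$, $Y_B\in\mathbf L(\mathcal H_B)$ subject to $\mathrm{tr}(\rho_A X_A)=\mathrm{tr}(\rho_B Y_B)=0$ and $\mathrm{tr}(\rho_A X_AX_A^\dagger)=\mathrm{tr}(\rho_B Y_BY_B^\dagger)=1$. *)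

theory Defs
  imports Complex_Main
begin

text \<open>A qubit is indexed by \<open>bool\<close> (False = |0>, True = |1>), two qubits by \<open>bool \<times> bool\<close>.\<close>

type_synonym 'i cmat = "'i \<Rightarrow> 'i \<Rightarrow> complex"

definition mtrace :: "('i::finite) cmat \<Rightarrow> complex" where
  "mtrace M = (\<Sum>i\<in>UNIV. M i i)"

definition mmult :: "('i::finite) cmat \<Rightarrow> 'i cmat \<Rightarrow> 'i cmat" where
  "mmult M N = (\<lambda>i k. \<Sum>j\<in>UNIV. M i j * N j k)"

definition madj :: "'i cmat \<Rightarrow> 'i cmat" where
  "madj M = (\<lambda>i j. cnj (M j i))"

definition tensor :: "'a cmat \<Rightarrow> 'b cmat \<Rightarrow> ('a \<times> 'b) cmat" where
  "tensor X Y = (\<lambda>(a, b) (a', b'). X a a' * Y b b')"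

definition ptrace_B :: "(('a::finite) \<times> ('b::finite)) cmat \<Rightarrow> 'a cmat" where
  "ptrace_B \<rho> = (\<lambda>a a'. \<Sum>b\<in>UNIV. \<rho> (a, b) (a', b))"

definition ptrace_A :: "(('a::finite) \<times> ('b::finite)) cmat \<Rightarrow> 'b cmat" where
  "ptrace_A \<rho> = (\<lambda>b b'. \<Sum>a\<in>UNIV. \<rho> (a, b) (a, b'))"

definition hermitian :: "'i cmat \<Rightarrow> bool" where
  "hermitian M \<longleftrightarrow> (\<forall>i j. M i j = cnj (M j i))"

definition qform :: "('i::finite) cmat \<Rightarrow> ('i \<Rightarrow> complex) \<Rightarrow> complex" where
  "qform M v = (\<Sum>i\<in>UNIV. \<Sum>j\<in>UNIV. cnj (v i) * M i j * v j)"

definition psd :: "('i::finite) cmat \<Rightarrow> bool" where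
  "psd M \<longleftrightarrow> hermitian M \<and> (\<forall>v. 0 \<le> Re (qform M v))"

definition density_matrix :: "('i::finite) cmat \<Rightarrow> bool" where
  "density_matrix \<rho> \<longleftrightarrow> psd \<rho> \<and> mtrace \<rho> = 1"

definition max_corr :: "(('a::finite) \<times> ('b::finite)) cmat \<Rightarrow> real" where
  "max_corr \<rho> = Sup {cmod (mtrace (mmult \<rho> (tensor X (madj Y)))) | X Y.
       mtrace (mmult (ptrace_B \<rho>) X) = 0 \<and> mtrace (mmult (ptrace_A \<rho>) Y) = 0 \<and>
       mtrace (mmult (ptrace_B \<rho>) (mmult X (madj X))) = 1 \<and>
       mtrace (mmult (ptrace_A \<rho>) (mmult Y (madj Y))) = 1}"

definition bell :: "bool \<times> bool \<Rightarrow> complex" where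
  "bell = (\<lambda>(a, b). if a = b then complex_of_real (1 / sqrt 2) else 0)"

end

theory Submission imports Defs begin

definition F :: "('i::finite) cmat \<Rightarrow> 'i cmat \<Rightarrow> 'i cmat \<Rightarrow> complex" where
  "F \<rho> M N = (\<Sum>i\<in>UNIV. \<Sum>j\<in>UNIV. \<Sum>k\<in>UNIV. \<rho> i j * M j k * cnj (N i k))"

lemma trF: "mtrace (mmult \<rho> (mmult M (madj N))) = F \<rho> M N"
  unfolding mtrace_def mmult_def madj_def F_def
  by (simp add: sum_distrib_left mult.assoc)

lemma F_herm: assumes "hermitian \<rho>" shows "cnj (F \<rho> M N) = F \<rho> N M"
proof -
  have h: "cnj (\<rho> i j) = \<rho> j i" for i j using assms unfolding hermitian_def by (metis complex_cnj_cnj)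
  have "cnj (F \<rho> M N) = (\<Sum>i\<in>UNIV. \<Sum>j\<in>UNIV. \<Sum>k\<in>UNIV. \<rho> j i * N i k * cnj (M j k))"
    unfolding F_def by (simp add: h mult.commute mult.left_commute)
  also have "\<dots> = F \<rho> N M" unfolding F_def by (rule sum.swap)
  finally show ?thesis .
qed

lemma F_qform: "F \<rho> M M = (\<Sum>k\<in>UNIV. qform \<rho> (\<lambda>j. M j k))"
proof -
  have "F \<rho> M M = (\<Sum>i\<in>UNIV. \<Sum>k\<in>UNIV. \<Sum>j\<in>UNIV. \<rho> i j * M j k * cnj (M i k))"
    unfolding F_def by (rule sum.cong[OF refl], rule sum.swap)
  also have "\<dots> = (\<Sum>k\<in>UNIV. \<Sum>i\<in>UNIV. \<Sum>j\<in>UNIV. \<rho> i j * M j k * cnj (M i k))"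
    by (rule sum.swap)
  also have "\<dots> = (\<Sum>k\<in>UNIV. qform \<rho> (\<lambda>j. M j k))"
    unfolding qform_def by (intro sum.cong refl) (simp add: mult_ac)
  finally show ?thesis .
qed

lemma F_pos: assumes "psd \<rho>" shows "0 \<le> Re (F \<rho> M M)"
  using assms unfolding F_qform psd_def by (simp add: sum_nonneg)

lemma F_expand:
  "F \<rho> (\<lambda>j k. M j k - c * N j k) (\<lambda>j k. M j k - c * N j k)
   = F \<rho> M M - cnj c * F \<rho> M N - c * F \<rho> N M + c * cnj c * F \<rho> N N"
proof -
  have t: "\<And>i j k. \<rho> i j * (M j k - c * N j k) * cnj (M i k - c * N i k) = \<rho> i j * M j k * cnj (M i k) - cnj c * (\<rho> i j * M j k * cnj (N i k)) - c * (\<rho> i j * N j k * cnj (M i k)) + (c * cnj c) * (\<rho> i j * N j k * cnj (N i k))"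
    by (simp add: algebra_simps)
  show ?thesis unfolding F_def t by (simp only: sum.distrib sum_subtractf sum_distrib_left[symmetric])
qed

lemma CS:
  assumes "psd \<rho>" "F \<rho> M M = 1" "F \<rho> N N = 1"
  shows "cmod (F \<rho> M N) \<le> 1"
proof -
  define c where "c = F \<rho> M N"
  have h: "F \<rho> N M = cnj c" using F_herm[of \<rho> M N] assms(1) unfolding psd_def c_def by simp
  have "0 \<le> Re (F \<rho> (\<lambda>j k. M j k - c * N j k) (\<lambda>j k. M j k - c * N j k))"
    by (rule F_pos[OF assms(1)])
  also have "F \<rho> (\<lambda>j k. M j k - c * N j k) (\<lambda>j k. M j k - c * N j k) = 1 - c * cnj c"
    unfolding F_expand h assms(2,3) c_def[symmetric] by (simp add: algebra_simps)
  finally have "Re (c * cnj c) \<le> 1" by simp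
  hence "(cmod c)^2 \<le> 1" using cmod_power2[of c] by (simp add: power2_eq_square) 
  thus ?thesis unfolding c_def using abs_square_le_1[of "cmod (F \<rho> M N)"] by simp
qed

definition Id2 :: "bool cmat" where "Id2 = (\<lambda>i j. if i = j then 1 else 0)"

lemma UNIV_bb: "(UNIV :: (bool \<times> bool) set) = {(False,False),(False,True),(True,False),(True,True)}"
  by (auto simp: UNIV_bool)
lemma sum_bb: "(\<Sum>i\<in>(UNIV :: (bool \<times> bool) set). f i) = f (False,False) + f (False,True) + f (True,False) + f (True,True)"
  unfolding UNIV_bb by (simp add: add.assoc)
lemma sum_b: "(\<Sum>i\<in>(UNIV :: bool set). f i) = f False + f True"
  unfolding UNIV_bool by simp

lemma id1: "mtrace (mmult (\<rho>::(bool\<times>bool) cmat) (tensor X (madj Y))) = F \<rho> (tensor X Id2) (tensor Id2 Y)"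
  unfolding mtrace_def mmult_def madj_def F_def tensor_def Id2_def sum_bb sum_b
  by (simp add: algebra_simps)
lemma id2: "mtrace (mmult (ptrace_B (\<rho>::(bool\<times>bool) cmat)) (mmult X (madj X))) = F \<rho> (tensor X Id2) (tensor X Id2)"
  unfolding mtrace_def mmult_def madj_def F_def tensor_def Id2_def sum_bb sum_b ptrace_B_def
  by (simp add: algebra_simps)
lemma id3: "mtrace (mmult (ptrace_A (\<rho>::(bool\<times>bool) cmat)) (mmult Y (madj Y))) = F \<rho> (tensor Id2 Y) (tensor Id2 Y)"
  unfolding mtrace_def mmult_def madj_def F_def tensor_def Id2_def sum_bb sum_b ptrace_A_def
  by (simp add: algebra_simps)

lemma sum_two:
  fixes f :: "'i::finite \<Rightarrow> 'b::comm_monoid_add"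
  assumes "i \<noteq> j" "\<And>k. k \<noteq> i \<Longrightarrow> k \<noteq> j \<Longrightarrow> f k = 0"
  shows "(\<Sum>k\<in>UNIV. f k) = f i + f j"
proof -
  have "(\<Sum>k\<in>UNIV. f k) = (\<Sum>k\<in>{i,j}. f k)"
    by (rule sum.mono_neutral_right) (use assms in auto)
  thus ?thesis using assms(1) by simp
qed

lemma qform_two:
  fixes M :: "('i::finite) cmat"
  assumes "i \<noteq> j" "\<And>k. k \<noteq> i \<Longrightarrow> k \<noteq> j \<Longrightarrow> v k = 0"
  shows "qform M v = cnj (v i) * M i i * v i + cnj (v i) * M i j * v j + cnj (v j) * M j i * v i + cnj (v j) * M j j * v j"
proof -
  have "qform M v = (\<Sum>a\<in>UNIV. cnj (v a) * M a i * v i + cnj (v a) * M a j * v j)"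
    unfolding qform_def by (rule sum.cong[OF refl], rule sum_two) (use assms in auto)
  also have "\<dots> = cnj (v i) * M i i * v i + cnj (v i) * M i j * v j + (cnj (v j) * M j i * v i + cnj (v j) * M j j * v j)"
    by (rule sum_two) (use assms in auto)
  finally show ?thesis by (simp add: add.assoc)
qed

lemma diag_real: "hermitian M \<Longrightarrow> M i i = complex_of_real (Re (M i i))"
proof -
  assume h: "hermitian M"
  have "M i i = cnj (M i i)" using h unfolding hermitian_def by blast
  hence "Im (M i i) = 0" by (simp add: complex_eq_iff)
  thus ?thesis by (simp add: complex_eq_iff)
qed

lemma psd_zero:
  fixes M :: "('i::finite) cmat"
  assumes "psd M" "M i i = 0" "i \<noteq> j"
  shows "M j i = 0"
proof (rule ccontr)
  assume w0: "M j i \<noteq> 0"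
  define w where "w = M j i"
  define r where "r = (\<bar>Re (M j j)\<bar> + 1) / (2 * (cmod w)^2)"
  have wp: "cmod w > 0" using w0 w_def by simp
  define t where "t = - complex_of_real r * cnj w"
  define v where "v = (\<lambda>k. if k = j then 1 else if k = i then t else 0)"
  have "M i j = cnj (M j i)" using assms(1) unfolding psd_def hermitian_def by blast
  hence herm: "M i j = cnj w" unfolding w_def .
  have q2: "qform M v = cnj (v i) * M i i * v i + cnj (v i) * M i j * v j + cnj (v j) * M j i * v i + cnj (v j) * M j j * v j"
    by (rule qform_two) (use assms(3) in \<open>auto simp: v_def\<close>)
  have vi: "v i = t" "v j = 1" using assms(3) by (auto simp: v_def)
  have "qform M v = cnj t * cnj w + w * t + M j j"
    unfolding q2 vi assms(2) herm w_def[symmetric] by simp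
  also have "\<dots> = M j j - 2 * complex_of_real r * (w * cnj w)"
    unfolding t_def by (simp add: algebra_simps)
  finally have "Re (qform M v) = Re (M j j) - 2 * r * (cmod w)^2"
    by (simp add: complex_mult_cnj cmod_power2 del: of_real_power)
  also have "\<dots> = Re (M j j) - (\<bar>Re (M j j)\<bar> + 1)"
    unfolding r_def using wp by (simp add: field_simps)
  also have "\<dots> < 0" by linarith
  finally have "Re (qform M v) < 0" .
  moreover have "0 \<le> Re (qform M v)" using assms(1) unfolding psd_def by blast
  ultimately show False by linarith
qed

lemma psd_offdiag:
  fixes M :: "('i::finite) cmat"
  assumes "psd M" "i \<noteq> j"
  shows "(Re (M i j))^2 \<le> Re (M i i) * Re (M j j)"
proof -
  have herm: "hermitian M" using assms(1) psd_def by blast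
  have hji: "M j i = cnj (M i j)" using herm unfolding hermitian_def by blast
  have pos: "0 \<le> s*s * Re (M i i) + 2 * s * t * Re (M i j) + t*t * Re (M j j)" for s t
  proof -
    define v where "v = (\<lambda>k. if k = i then complex_of_real s else if k = j then complex_of_real t else 0)"
    have q2: "qform M v = cnj (v i) * M i i * v i + cnj (v i) * M i j * v j + cnj (v j) * M j i * v i + cnj (v j) * M j j * v j"
      by (rule qform_two) (use assms(2) in \<open>auto simp: v_def\<close>)
    have vi: "v i = complex_of_real s" "v j = complex_of_real t" using assms(2) by (auto simp: v_def)
    have re: "Re (cnj (complex_of_real p) * z * complex_of_real q) = p * q * Re z" for p q z
      by simp
    have "Re (qform M v) = s*s * Re (M i i) + s*t * Re (M i j) + t*s * Re (M j i) + t*t * Re (M j j)"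
      unfolding q2 vi plus_complex.sel re by simp
    also have "\<dots> = s*s * Re (M i i) + 2 * s * t * Re (M i j) + t*t * Re (M j j)"
      unfolding hji by (simp add: algebra_simps)
    finally have e: "Re (qform M v) = s*s * Re (M i i) + 2 * s * t * Re (M i j) + t*t * Re (M j j)" .
    have "0 \<le> Re (qform M v)" using assms(1) unfolding psd_def by blast
    thus ?thesis unfolding e .
  qed
  have B: "0 \<le> Re (M j j)" using pos[of 0 1] by simp
  show ?thesis
  proof (cases "Re (M j j) = 0")
    case True
    hence "M j j = 0" using diag_real[OF herm, of j] by simp
    hence "M i j = 0" using psd_zero[OF assms(1), of j i] assms(2) by simp
    thus ?thesis using True by simp
  next
    case False
    hence Bp: "Re (M j j) > 0" using B by simp
    have "0 \<le> Re (M j j) * (Re (M i i) * Re (M j j) - (Re (M i j))^2)"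
      using pos[of "Re (M j j)" "- Re (M i j)"] by (simp add: power2_eq_square algebra_simps)
    thus ?thesis using Bp by (simp add: zero_le_mult_iff)
  qed
qed

lemma psd_zero2:
  fixes M :: "('i::finite) cmat"
  assumes "psd M" "M i i = 0"
  shows "M j i = 0" "M i j = 0"
proof -
  show "M j i = 0"
  proof (cases "i = j")
    case True thus ?thesis using assms(2) by simp
  next
    case False thus ?thesis by (rule psd_zero[OF assms])
  qed
  moreover have "M i j = cnj (M j i)" using assms(1) unfolding psd_def hermitian_def by blast
  ultimately show "M i j = 0" by simp
qed

lemma psd_diag_bb:
  fixes M :: "(bool \<times> bool) cmat"
  assumes "psd M"
  shows "0 \<le> Re (M i i)"
proof -
  define j :: "bool \<times> bool" where "j = (\<not> fst i, snd i)"
  have j: "i \<noteq> j" unfolding j_def by (cases i) auto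
  define v :: "bool \<times> bool \<Rightarrow> complex" where "v = (\<lambda>k. if k = i then 1 else 0)"
  have "qform M v = cnj (v i) * M i i * v i + cnj (v i) * M i j * v j + cnj (v j) * M j i * v i + cnj (v j) * M j j * v j"
    by (rule qform_two) (use j in \<open>auto simp: v_def\<close>)
  also have "\<dots> = M i i" using j by (simp add: v_def)
  finally have "qform M v = M i i" .
  moreover have "0 \<le> Re (qform M v)" using assms unfolding psd_def by blast
  ultimately show ?thesis by simp
qed

definition dg :: "real \<Rightarrow> real \<Rightarrow> bool cmat" where
  "dg u v = (\<lambda>i j. if i = j then complex_of_real (if i then v else u) else 0)"

lemma dg_tr: "mtrace (mmult \<sigma> (dg u v)) = \<sigma> False False * of_real u + \<sigma> True True * of_real v"
  unfolding mtrace_def mmult_def dg_def sum_b by simp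

lemma dg_tr2: "mtrace (mmult \<sigma> (mmult (dg u v) (madj (dg u v)))) = \<sigma> False False * of_real (u*u) + \<sigma> True True * of_real (v*v)"
  unfolding mtrace_def mmult_def madj_def dg_def sum_b by simp

lemma dg_simps: "dg u v False False = of_real u" "dg u v True True = of_real v"
  "dg u v False True = 0" "dg u v True False = 0"
  unfolding dg_def by simp_all

lemma corr_dg: "mtrace (mmult (\<rho>::(bool\<times>bool) cmat) (tensor (dg a1 a2) (madj (dg b1 b2)))) =
   \<rho> (False,False) (False,False) * of_real (a1*b1) + \<rho> (False,True) (False,True) * of_real (a1*b2)
 + \<rho> (True,False) (True,False) * of_real (a2*b1) + \<rho> (True,True) (True,True) * of_real (a2*b2)"
  unfolding mtrace_def mmult_def madj_def sum_bb tensor_def by (simp add: dg_simps)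

lemma zw:
  assumes "\<sigma> False False = of_real p" "\<sigma> True True = of_real q" "p > 0" "q > 0" "p + q = 1"
  shows "mtrace (mmult \<sigma> (dg (sqrt q / sqrt p) (- (sqrt p / sqrt q)))) = 0"
        "mtrace (mmult \<sigma> (mmult (dg (sqrt q / sqrt p) (- (sqrt p / sqrt q))) (madj (dg (sqrt q / sqrt p) (- (sqrt p / sqrt q)))))) = 1"
proof -
  have sp: "sqrt p > 0" "sqrt q > 0" using assms by auto
  have pp: "sqrt p * sqrt p = p" "sqrt q * sqrt q = q" using assms by auto
  have a1: "(P*P) * (Q/P) = P*Q" "(P*P) * ((Q/P)*(Q/P)) = Q*Q" if "P > 0" for P Q :: real
    using that by (simp_all add: field_simps)
  have b1: "p * (sqrt q / sqrt p) = sqrt p * sqrt q" "q * (sqrt p / sqrt q) = sqrt q * sqrt p"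
    using a1(1)[OF sp(1), of "sqrt q"] a1(1)[OF sp(2), of "sqrt p"] pp by simp_all
  have b2: "p * ((sqrt q / sqrt p) * (sqrt q / sqrt p)) = q" "q * ((sqrt p / sqrt q) * (sqrt p / sqrt q)) = p"
    using a1(2)[OF sp(1), of "sqrt q"] a1(2)[OF sp(2), of "sqrt p"] pp by simp_all
  have f1: "p * (sqrt q / sqrt p) + q * (- (sqrt p / sqrt q)) = 0"
    using b1 by (simp add: mult.commute)
  show "mtrace (mmult \<sigma> (dg (sqrt q / sqrt p) (- (sqrt p / sqrt q)))) = 0"
    unfolding dg_tr assms(1,2) by (simp only: of_real_add[symmetric] of_real_mult[symmetric] f1 of_real_0)
  have f2: "p * ((sqrt q / sqrt p) * (sqrt q / sqrt p)) + q * ((- (sqrt p / sqrt q)) * (- (sqrt p / sqrt q))) = 1"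
    using b2 assms(5) by simp
  show "mtrace (mmult \<sigma> (mmult (dg (sqrt q / sqrt p) (- (sqrt p / sqrt q))) (madj (dg (sqrt q / sqrt p) (- (sqrt p / sqrt q)))))) = 1"
    unfolding dg_tr2 assms(1,2) by (simp only: of_real_add[symmetric] of_real_mult[symmetric] f2 of_real_1)
qed

lemma side_witness:
  assumes "\<sigma> False False = of_real p" "\<sigma> True True = of_real q" "p \<ge> 0" "q \<ge> 0" "p + q = 1"
    "q = 0 \<Longrightarrow> \<sigma> True False = 0" "p = 0 \<Longrightarrow> \<sigma> False True = 0"
  shows "\<exists>X. mtrace (mmult \<sigma> X) = 0 \<and> mtrace (mmult \<sigma> (mmult X (madj X))) = 1"
proof (cases "p > 0 \<and> q > 0")
  case True
  hence "p > 0" "q > 0" by auto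
  from zw(1)[of \<sigma> p q, OF assms(1,2) this assms(5)] zw(2)[of \<sigma> p q, OF assms(1,2) this assms(5)] show ?thesis by blast
next
  case False
  then consider "q = 0" | "p = 0" using assms(3,4) by linarith
  then show ?thesis
  proof cases
    case 1
    hence "p = 1" using assms(5) by simp
    let ?X = "(\<lambda>i j. if i = False \<and> j = True then 1 else 0) :: bool cmat"
    have "mtrace (mmult \<sigma> ?X) = 0 \<and> mtrace (mmult \<sigma> (mmult ?X (madj ?X))) = 1"
      unfolding mtrace_def mmult_def madj_def sum_b using assms(1,6) 1 \<open>p = 1\<close> by simp
    then show ?thesis by blast
  next
    case 2
    hence "q = 1" using assms(5) by simp
    let ?X = "(\<lambda>i j. if i = True \<and> j = False then 1 else 0) :: bool cmat"
    have "mtrace (mmult \<sigma> ?X) = 0 \<and> mtrace (mmult \<sigma> (mmult ?X (madj ?X))) = 1"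
      unfolding mtrace_def mmult_def madj_def sum_b using assms(2,7) 2 \<open>q = 1\<close> by simp
    then show ?thesis by blast
  qed
qed

lemma key_ineq:
  fixes a b x y c :: real
  assumes "a \<ge> 0" "b \<ge> 0" "x \<ge> 0" "y \<ge> 0" "a + b + x + y = 1" "c \<ge> 0" "c^2 \<le> a * b"
  shows "4 * (a*b - x*y) \<ge> (2*c - (x+y)) * (2 * ((a+x)*(y+b) + (a+y)*(x+b)))"
proof -
  define u where "u = x + y"
  define e where "e = x - y"
  define g where "g = 1 - u - 2*c"
  have id: "4 * (a*b - x*y) - (2*c - (x+y)) * (2 * ((a+x)*(y+b) + (a+y)*(x+b)))
     = (g+2*u)*(4*a*b-4*c*c) + e^2*(1-u+2*c) + g*(1-g-2*u)^2"
    using assms(5) unfolding u_def e_def g_def by algebra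
  have sq: "(a+b)^2 \<ge> (2*c)^2"
  proof -
    have "(a+b)^2 = (a-b)^2 + 4*(a*b)" by (simp add: power2_eq_square algebra_simps)
    also have "\<dots> \<ge> 4 * c^2" using assms(7) by (smt (verit) zero_le_power2)
    finally show ?thesis by (simp add: power2_eq_square)
  qed
  have "a + b \<ge> 2*c" using power2_le_imp_le[OF sq] assms by simp
  hence g0: "g \<ge> 0" unfolding g_def u_def using assms(5) by linarith
  have u1: "u \<le> 1" "u \<ge> 0" unfolding u_def using assms by linarith+
  have t1: "(g+2*u)*(4*a*b-4*c*c) \<ge> 0"
    using g0 u1 assms(7) by (simp add: power2_eq_square)
  have t2: "e^2*(1-u+2*c) \<ge> 0" using u1 assms(6) by simp
  have t3: "g*(1-g-2*u)^2 \<ge> 0" using g0 by simp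
  show ?thesis using id t1 t2 t3 by linarith
qed

lemma Rform:
  fixes P1 Q1 P2 Q2 a b x y :: real
  assumes "P1 > 0" "Q1 > 0" "P2 > 0" "Q2 > 0"
  shows "a*((Q1/P1)*(Q2/P2)) + x*((Q1/P1)*(-(P2/Q2))) + y*((-(P1/Q1))*(Q2/P2)) + b*((-(P1/Q1))*(-(P2/Q2)))
    = (a*(Q1*Q1)*(Q2*Q2) - x*(Q1*Q1)*(P2*P2) - y*(P1*P1)*(Q2*Q2) + b*(P1*P1)*(P2*P2))/(P1*Q1*P2*Q2)"
  using assms by (simp add: field_simps)

theorem lemma1:
  fixes \<rho> :: "(bool \<times> bool) cmat" and \<epsilon> :: real
  assumes "density_matrix \<rho>"
    and "\<epsilon> \<ge> 0"
    and "Re (qform \<rho> bell) \<ge> 1 - \<epsilon>"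
  shows "max_corr \<rho> \<ge> 1 - 2 * \<epsilon>"
proof -
  have psd: "psd \<rho>" and tr1: "mtrace \<rho> = 1" using assms(1) unfolding density_matrix_def by auto
  have herm: "hermitian \<rho>" using psd psd_def by blast
  define a where "a = Re (\<rho> (False,False) (False,False))"
  define x where "x = Re (\<rho> (False,True) (False,True))"
  define y where "y = Re (\<rho> (True,False) (True,False))"
  define b where "b = Re (\<rho> (True,True) (True,True))"
  define c where "c = Re (\<rho> (False,False) (True,True))"
  have ea: "\<rho> (False,False) (False,False) = of_real a" unfolding a_def by (rule diag_real[OF herm])
  have ex: "\<rho> (False,True) (False,True) = of_real x" unfolding x_def by (rule diag_real[OF herm])
  have ey: "\<rho> (True,False) (True,False) = of_real y" unfolding y_def by (rule diag_real[OF herm])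
  have eb: "\<rho> (True,True) (True,True) = of_real b" unfolding b_def by (rule diag_real[OF herm])
  have a0: "a \<ge> 0" unfolding a_def by (rule psd_diag_bb[OF psd])
  have x0: "x \<ge> 0" unfolding x_def by (rule psd_diag_bb[OF psd])
  have y0: "y \<ge> 0" unfolding y_def by (rule psd_diag_bb[OF psd])
  have b0: "b \<ge> 0" unfolding b_def by (rule psd_diag_bb[OF psd])
  have "mtrace \<rho> = of_real (a + x + y + b)" unfolding mtrace_def sum_bb ea ex ey eb by simp
  hence "a + x + y + b = 1" using tr1 by (metis of_real_eq_1_iff)
  hence sum1: "a + b + x + y = 1" by linarith
  have cc: "c^2 \<le> a*b" unfolding c_def a_def b_def by (rule psd_offdiag[OF psd]) simp
  have r2: "cnj (complex_of_real (1 / sqrt 2)) * z * complex_of_real (1 / sqrt 2) = z / 2" for z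
  proof -
    have "complex_of_real (1 / sqrt 2) * complex_of_real (1 / sqrt 2) = complex_of_real (1/2)"
      by (simp flip: of_real_mult)
    thus ?thesis by (simp add: algebra_simps)
  qed
  have "qform \<rho> bell = \<rho> (False,False) (False,False) / 2 + \<rho> (False,False) (True,True) / 2
      + \<rho> (True,True) (False,False) / 2 + \<rho> (True,True) (True,True) / 2"
  proof -
    have s2: "complex_of_real (sqrt 2) * complex_of_real (sqrt 2) = 2" by (simp flip: of_real_mult)
    show ?thesis unfolding qform_def sum_bb bell_def by (simp add: r2 s2)
  qed
  moreover have "Re (\<rho> (True,True) (False,False)) = c"
    unfolding c_def using herm unfolding hermitian_def by (metis cnj.simps(1))
  ultimately have fid: "Re (qform \<rho> bell) = (a+b)/2 + c"
    unfolding a_def b_def c_def by simp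
  have fid2: "1 - \<epsilon> \<le> (a+b)/2 + c" using assms(3) fid by simp
  define S where "S = {cmod (mtrace (mmult \<rho> (tensor X (madj Y)))) | X Y.
       mtrace (mmult (ptrace_B \<rho>) X) = 0 \<and> mtrace (mmult (ptrace_A \<rho>) Y) = 0 \<and>
       mtrace (mmult (ptrace_B \<rho>) (mmult X (madj X))) = 1 \<and>
       mtrace (mmult (ptrace_A \<rho>) (mmult Y (madj Y))) = 1}"
  have mc: "max_corr \<rho> = Sup S" unfolding max_corr_def S_def ..
  have bdd: "z \<le> 1" if "z \<in> S" for z
  proof -
    obtain X Y where z: "z = cmod (mtrace (mmult \<rho> (tensor X (madj Y))))"
      and c2: "mtrace (mmult (ptrace_B \<rho>) (mmult X (madj X))) = 1"
      and c3: "mtrace (mmult (ptrace_A \<rho>) (mmult Y (madj Y))) = 1"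
      using \<open>z \<in> S\<close> unfolding S_def by blast
    have "F \<rho> (tensor X Id2) (tensor X Id2) = 1" using c2 id2 by simp
    moreover have "F \<rho> (tensor Id2 Y) (tensor Id2 Y) = 1" using c3 id3 by simp
    ultimately show ?thesis using CS[OF psd] z id1 by simp
  qed
  have pB1: "ptrace_B \<rho> False False = of_real (a + x)" unfolding ptrace_B_def sum_b ea ex by simp
  have pB2: "ptrace_B \<rho> True True = of_real (y + b)" unfolding ptrace_B_def sum_b ey eb by simp
  have pA1: "ptrace_A \<rho> False False = of_real (a + y)" unfolding ptrace_A_def sum_b ea ey by simp
  have pA2: "ptrace_A \<rho> True True = of_real (x + b)" unfolding ptrace_A_def sum_b ex eb by simp
  have "\<exists>z\<in>S. 1 - 2*\<epsilon> \<le> z"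
  proof (cases "1 - 2*\<epsilon> \<le> 0")
    case True
    have "\<exists>X. mtrace (mmult (ptrace_B \<rho>) X) = 0 \<and> mtrace (mmult (ptrace_B \<rho>) (mmult X (madj X))) = 1"
    proof (rule side_witness[of "ptrace_B \<rho>" "a + x" "y + b", OF pB1 pB2])
      show "0 \<le> a + x" "0 \<le> y + b" "a + x + (y + b) = 1" using a0 x0 y0 b0 sum1 by linarith+
      show "ptrace_B \<rho> True False = 0" if "y + b = 0"
      proof -
        have "y = 0" "b = 0" using that y0 b0 by linarith+
        hence "\<rho> (True,False) (True,False) = 0" "\<rho> (True,True) (True,True) = 0" using ey eb by simp_all
        thus ?thesis unfolding ptrace_B_def sum_b using psd_zero2(2)[OF psd] by simp
      qed
      show "ptrace_B \<rho> False True = 0" if "a + x = 0"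
      proof -
        have "a = 0" "x = 0" using that a0 x0 by linarith+
        hence "\<rho> (False,False) (False,False) = 0" "\<rho> (False,True) (False,True) = 0" using ea ex by simp_all
        thus ?thesis unfolding ptrace_B_def sum_b using psd_zero2(2)[OF psd] by simp
      qed
    qed
    then obtain X where X: "mtrace (mmult (ptrace_B \<rho>) X) = 0" "mtrace (mmult (ptrace_B \<rho>) (mmult X (madj X))) = 1"
      by blast
    have "\<exists>Y. mtrace (mmult (ptrace_A \<rho>) Y) = 0 \<and> mtrace (mmult (ptrace_A \<rho>) (mmult Y (madj Y))) = 1"
    proof (rule side_witness[of "ptrace_A \<rho>" "a + y" "x + b", OF pA1 pA2])
      show "0 \<le> a + y" "0 \<le> x + b" "a + y + (x + b) = 1" using a0 x0 y0 b0 sum1 by linarith+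
      show "ptrace_A \<rho> True False = 0" if "x + b = 0"
      proof -
        have "x = 0" "b = 0" using that x0 b0 by linarith+
        hence "\<rho> (False,True) (False,True) = 0" "\<rho> (True,True) (True,True) = 0" using ex eb by simp_all
        thus ?thesis unfolding ptrace_A_def sum_b using psd_zero2(2)[OF psd] by simp
      qed
      show "ptrace_A \<rho> False True = 0" if "a + y = 0"
      proof -
        have "a = 0" "y = 0" using that a0 y0 by linarith+
        hence "\<rho> (False,False) (False,False) = 0" "\<rho> (True,False) (True,False) = 0" using ea ey by simp_all
        thus ?thesis unfolding ptrace_A_def sum_b using psd_zero2(2)[OF psd] by simp
      qed
    qed
    then obtain Y where Y: "mtrace (mmult (ptrace_A \<rho>) Y) = 0" "mtrace (mmult (ptrace_A \<rho>) (mmult Y (madj Y))) = 1"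
      by blast
    have "cmod (mtrace (mmult \<rho> (tensor X (madj Y)))) \<in> S" unfolding S_def using X Y by blast
    moreover have "1 - 2*\<epsilon> \<le> cmod (mtrace (mmult \<rho> (tensor X (madj Y))))"
      using True norm_ge_zero[of "mtrace (mmult \<rho> (tensor X (madj Y)))"] by linarith
    ultimately show ?thesis by blast
  next
    case False
    define m where "m = 1 - 2*\<epsilon>"
    have m0: "m > 0" using False m_def by simp
    have "2 - 2*\<epsilon> \<le> a + b + 2*c" using fid2 by (simp add: field_simps)
    hence mc2: "m \<le> 2*c - (x+y)" using sum1 unfolding m_def by linarith
    hence c0: "c > 0" using m0 x0 y0 by linarith
    have "a*b > 0" using cc c0 by (smt (verit) zero_less_power)
    hence ap: "a > 0" and bp: "b > 0" using a0 b0 by (auto simp: zero_less_mult_iff)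
    define pA where "pA = a + x"
    define qA where "qA = y + b"
    define pB where "pB = a + y"
    define qB where "qB = x + b"
    have pos: "pA > 0" "qA > 0" "pB > 0" "qB > 0" unfolding pA_def qA_def pB_def qB_def
      using ap bp x0 y0 by linarith+
    define X where "X = dg (sqrt qA / sqrt pA) (- (sqrt pA / sqrt qA))"
    define Y where "Y = dg (sqrt qB / sqrt pB) (- (sqrt pB / sqrt qB))"
    have s1: "pA + qA = 1" "pB + qB = 1" unfolding pA_def qA_def pB_def qB_def using sum1 by linarith+
    note zA = zw[of "ptrace_B \<rho>" pA qA, OF pB1[folded pA_def] pB2[folded qA_def] pos(1,2) s1(1), folded X_def]
    note zB = zw[of "ptrace_A \<rho>" pB qB, OF pA1[folded pB_def] pA2[folded qB_def] pos(3,4) s1(2), folded Y_def]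
    define P1 where "P1 = sqrt pA"
    define Q1 where "Q1 = sqrt qA"
    define P2 where "P2 = sqrt pB"
    define Q2 where "Q2 = sqrt qB"
    have Ppos: "P1 > 0" "Q1 > 0" "P2 > 0" "Q2 > 0" unfolding P1_def Q1_def P2_def Q2_def using pos by auto
    have Psq: "P1*P1 = pA" "Q1*Q1 = qA" "P2*P2 = pB" "Q2*Q2 = qB"
      unfolding P1_def Q1_def P2_def Q2_def using pos by auto
    define R where "R = a*((Q1/P1)*(Q2/P2)) + x*((Q1/P1)*(-(P2/Q2))) + y*((-(P1/Q1))*(Q2/P2)) + b*((-(P1/Q1))*(-(P2/Q2)))"
    have corr: "mtrace (mmult \<rho> (tensor X (madj Y))) = of_real R"
      unfolding X_def Y_def corr_dg ea ex ey eb R_def P1_def P2_def Q1_def Q2_def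
      by (simp only: of_real_add[symmetric] of_real_mult[symmetric])
    have Rf: "R = (a*qA*qB - x*qA*pB - y*pA*qB + b*pA*pB)/(P1*Q1*P2*Q2)"
      unfolding R_def Rform[OF Ppos] Psq by simp
    have num: "a*qA*qB - x*qA*pB - y*pA*qB + b*pA*pB = a*b - x*y"
      unfolding pA_def qA_def pB_def qB_def using sum1 by algebra
    have D0: "P1*Q1*P2*Q2 > 0" using Ppos by simp
    have amgm: "2*(P1*Q1*P2*Q2) \<le> pA*qA + pB*qB"
    proof -
      have "0 \<le> (P1*Q1 - P2*Q2)^2" by simp
      thus ?thesis unfolding Psq[symmetric] by (simp add: power2_eq_square algebra_simps)
    qed
    have ki: "4 * (a*b - x*y) \<ge> (2*c - (x+y)) * (2 * (pA*qA + pB*qB))"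
      unfolding pA_def qA_def pB_def qB_def using key_ineq[OF a0 b0 x0 y0 sum1 less_imp_le[OF c0] cc] .
    have Q0: "pA*qA + pB*qB \<ge> 0" using pos by simp
    have "(2*c - (x+y)) * (2 * (pA*qA + pB*qB)) \<ge> m * (2 * (pA*qA + pB*qB))"
      using mc2 Q0 by (simp add: mult_right_mono)
    moreover have "m * (2 * (pA*qA + pB*qB)) \<ge> m * (4*(P1*Q1*P2*Q2))"
      using amgm m0 by simp
    ultimately have "m * (4*(P1*Q1*P2*Q2)) \<le> 4 * (a*b - x*y)" using ki by linarith
    hence "4 * (m * (P1*Q1*P2*Q2)) \<le> 4 * (a*b - x*y)" by (simp only: mult.left_commute[of m 4])
    hence "m * (P1*Q1*P2*Q2) \<le> a*b - x*y" by (rule mult_left_le_imp_le) simp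
    hence "m \<le> R" unfolding Rf num using D0 by (simp add: field_simps)
    hence "m \<le> cmod (mtrace (mmult \<rho> (tensor X (madj Y))))" unfolding corr by simp
    moreover have "cmod (mtrace (mmult \<rho> (tensor X (madj Y)))) \<in> S"
      unfolding S_def using zA zB by blast
    ultimately show ?thesis unfolding m_def by blast
  qed
  then obtain z where z: "z \<in> S" "1 - 2*\<epsilon> \<le> z" by blast
  have "z \<le> Sup S" by (rule cSup_upper[OF z(1)]) (rule bdd_aboveI, erule bdd)
  thus ?thesis unfolding mc using z(2) by linarith
qed

end
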